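(* Let $(A^1,B^1)$ be an $n_1\times m_1$ bimatrix game and $(A^2,B^2)$ an $n_2\times m_2$ bimatrix game, and let $(A,B)=(A^1,B^1)\times(A^2,B^2)$ be their product game. If $(x,y)$ is a Nash equilibrium of $(A,B)$, then $(x^1,y^1)$ defined by $x^1_i=\sum_{l=1}^{n_2}x_{[i,l]}$ for $1\le i\le n_1$ and $y^1_j=\sum_{l=1}^{m_2}y_{[j,l]}$ for $1\le j\le m_1$ is a Nash equilibrium of $(A^1,B^1)$.
   Context: An $n\times m$ bimatrix game $(A,B)$ consists of two real $n\times m$ matrices. A mixed strategy of the row player is a probability vector $x\in\Delta_n=\{x\in\mathbb{R}^n_{\ge 0}:\sum_i x_i=1\}$, of the column player $y\in\Delta_m$; the expected payoffs are $x^TAy$ (row player) and $x^TBy$ (column player). $(x,y)$ is a Nash equilibrium if $x^TAy\ge \hat x^TAy$ for all $\hat x\in\Delta_n$ and $x^TBy\ge x^TB\hat y$ for all $\hat y\in\Delta_m$. For index ranges $\{1,\dots,p\}\times\{1,\dots,q\}$, the pairing $[i,j]=(i-1)q+j$ is the standard bijection onto $\{1,\dots,pq\}$. The product game $(A^1,B^1)\times(A^2,B^2)$ of an $n_1\times m_1$ game and an $n_2\times m_2$ game is the $(n_1n_2)\times(m_1m_2)$ game $(A,B)$ with $A_{[i_1,i_2],[j_1,j_2]}=A^1_{i_1j_1}+A^2_{i_2j_2}$ and $B_{[i_1,i_2],[j_1,j_2]}=B^1_{i_1j_1}+B^2_{i_2j_2}$ (rows indexed via the pairing on $\{1..n_1\}\times\{1..n_2\}$,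 columns via the pairing on $\{1..m_1\}\times\{1..m_2\}$). *)

theory Defs
  imports "HOL-Analysis.Analysis"
begin

text \<open>Matrices and vectors are functions on natural numbers, indexed from 1:
  an n x m matrix is M :: nat => nat => real with entries M i j for 1 <= i <= n, 1 <= j <= m;
  a vector in R^n is x :: nat => real with entries x i for 1 <= i <= n.\<close>

definition mixed_strats :: "nat \<Rightarrow> (nat \<Rightarrow> real) set" where
  "mixed_strats n = {x. (\<forall>i\<in>{1..n}. x i \<ge> 0) \<and> (\<Sum>i=1..n. x i) = 1}"

definition bilin :: "nat \<Rightarrow> nat \<Rightarrow> (nat \<Rightarrow> real) \<Rightarrow> (nat \<Rightarrow> nat \<Rightarrow> real) \<Rightarrow> (nat \<Rightarrow> real) \<Rightarrow> real" where
  "bilin n m x M y = (\<Sum>i=1..n. \<Sum>j=1..m. x i * M i j * y j)"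

definition nash_eq :: "nat \<Rightarrow> nat \<Rightarrow> (nat \<Rightarrow> nat \<Rightarrow> real) \<Rightarrow> (nat \<Rightarrow> nat \<Rightarrow> real)
    \<Rightarrow> (nat \<Rightarrow> real) \<Rightarrow> (nat \<Rightarrow> real) \<Rightarrow> bool" where
  "nash_eq n m A B x y \<longleftrightarrow> x \<in> mixed_strats n \<and> y \<in> mixed_strats m \<and>
     (\<forall>x'\<in>mixed_strats n. bilin n m x A y \<ge> bilin n m x' A y) \<and>
     (\<forall>y'\<in>mixed_strats m. bilin n m x B y \<ge> bilin n m x B y')"

text \<open>Standard pairing [i,j] = (i-1)q + j of {1..p} x {1..q} onto {1..pq}.\<close>
definition pairing :: "nat \<Rightarrow> nat \<Rightarrow> nat \<Rightarrow> nat" where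
  "pairing q i j = (i - 1) * q + j"

definition is_product_game :: "nat \<Rightarrow> nat \<Rightarrow> nat \<Rightarrow> nat
    \<Rightarrow> (nat \<Rightarrow> nat \<Rightarrow> real) \<Rightarrow> (nat \<Rightarrow> nat \<Rightarrow> real)
    \<Rightarrow> (nat \<Rightarrow> nat \<Rightarrow> real) \<Rightarrow> (nat \<Rightarrow> nat \<Rightarrow> real)
    \<Rightarrow> (nat \<Rightarrow> nat \<Rightarrow> real) \<Rightarrow> (nat \<Rightarrow> nat \<Rightarrow> real) \<Rightarrow> bool" where
  "is_product_game n1 m1 n2 m2 A1 B1 A2 B2 A B \<longleftrightarrow>
     (\<forall>i1\<in>{1..n1}. \<forall>i2\<in>{1..n2}. \<forall>j1\<in>{1..m1}. \<forall>j2\<in>{1..m2}.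
        A (pairing n2 i1 i2) (pairing m2 j1 j2) = A1 i1 j1 + A2 i2 j2 \<and>
        B (pairing n2 i1 i2) (pairing m2 j1 j2) = B1 i1 j1 + B2 i2 j2)"

end

theory Submission imports Defs begin

lemma sum_pair:
  "(\<Sum>p=1..n1*n2. f p) = (\<Sum>i=1..n1. \<Sum>l=1..n2. f (pairing n2 i l))"
proof (induction n1)
  case 0 then show ?case by simp
next
  case (Suc k)
  have "{1..Suc k * n2} = {1..k*n2} \<union> {k*n2+1..k*n2+n2}" by auto
  moreover have "{1..k*n2} \<inter> {k*n2+1..k*n2+n2} = {}" by auto
  ultimately have "(\<Sum>p=1..Suc k*n2. f p) = (\<Sum>p=1..k*n2. f p) + (\<Sum>p=k*n2+1..k*n2+n2. f p)"
    by (simp add: sum.union_disjoint)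
  also have "(\<Sum>p=k*n2+1..k*n2+n2. f p) = (\<Sum>l=1..n2. f (k*n2 + l))"
  proof -
    have "(\<Sum>l=1..n2. f (k*n2 + l)) = sum f ((\<lambda>l. k*n2+l) ` {1..n2})"
      by (subst sum.reindex) (auto simp: inj_on_def)
    moreover have "(\<lambda>l. k*n2+l) ` {1..n2} = {k*n2+1..k*n2+n2}"
      by (auto simp: image_iff intro!: exI[where x="_ - k*n2"])
    ultimately show ?thesis by (simp add: add.commute)
  qed
  finally show ?case using Suc by (simp add: pairing_def)
qed

lemma bilin_gen:
  assumes H: "\<forall>i1\<in>{1..n1}. \<forall>i2\<in>{1..n2}. \<forall>j1\<in>{1..m1}. \<forall>j2\<in>{1..m2}.
        M (pairing n2 i1 i2) (pairing m2 j1 j2) = M1 i1 j1 + M2 i2 j2"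
  shows "bilin (n1*n2) (m1*m2) x M y =
     bilin n1 m1 (\<lambda>i. \<Sum>l=1..n2. x (pairing n2 i l)) M1 (\<lambda>j. \<Sum>k=1..m2. y (pairing m2 j k))
   + bilin n2 m2 (\<lambda>l. \<Sum>i=1..n1. x (pairing n2 i l)) M2 (\<lambda>k. \<Sum>j=1..m1. y (pairing m2 j k))"
proof -
    let ?P = "pairing n2" and ?Q = "pairing m2"
  have "bilin (n1*n2) (m1*m2) x M y = (\<Sum>i=1..n1. \<Sum>l=1..n2. \<Sum>j=1..m1. \<Sum>k=1..m2.
        x (?P i l) * M (?P i l) (?Q j k) * y (?Q j k))"
    unfolding bilin_def
    using sum_pair[of "\<lambda>p. \<Sum>j=1..m1*m2. x p * M p j * y j" n1 n2]
      sum_pair[of "\<lambda>q. x (?P _ _) * M (?P _ _) q * y q" m1 m2]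
    by simp
  also have "\<dots> = (\<Sum>i=1..n1. \<Sum>l=1..n2. \<Sum>j=1..m1. \<Sum>k=1..m2.
        x (?P i l) * M1 i j * y (?Q j k) + x (?P i l) * M2 l k * y (?Q j k))"
    using H by (intro sum.cong refl) (simp add: algebra_simps)
  also have "\<dots> = (\<Sum>i=1..n1. \<Sum>l=1..n2. \<Sum>j=1..m1. \<Sum>k=1..m2. x (?P i l) * M1 i j * y (?Q j k))
     + (\<Sum>i=1..n1. \<Sum>l=1..n2. \<Sum>j=1..m1. \<Sum>k=1..m2. x (?P i l) * M2 l k * y (?Q j k))"
    by (simp add: sum.distrib)
  also have "(\<Sum>i=1..n1. \<Sum>l=1..n2. \<Sum>j=1..m1. \<Sum>k=1..m2. x (?P i l) * M1 i j * y (?Q j k))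
     = bilin n1 m1 (\<lambda>i. \<Sum>l=1..n2. x (pairing n2 i l)) M1 (\<lambda>j. \<Sum>k=1..m2. y (pairing m2 j k))"
  proof -
    have "(\<Sum>i=1..n1. \<Sum>l=1..n2. \<Sum>j=1..m1. \<Sum>k=1..m2. x (?P i l) * M1 i j * y (?Q j k))
       = (\<Sum>i=1..n1. \<Sum>j=1..m1. \<Sum>l=1..n2. \<Sum>k=1..m2. x (?P i l) * M1 i j * y (?Q j k))"
      by (rule sum.cong[OF refl], rule sum.swap)
    also have "\<dots> = (\<Sum>i=1..n1. \<Sum>j=1..m1. \<Sum>k=1..m2. \<Sum>l=1..n2. x (?P i l) * M1 i j * y (?Q j k))"
      by (rule sum.cong[OF refl], rule sum.cong[OF refl], rule sum.swap)
    finally show ?thesis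
      unfolding bilin_def sum_distrib_left sum_distrib_right by simp
  qed
  also have "(\<Sum>i=1..n1. \<Sum>l=1..n2. \<Sum>j=1..m1. \<Sum>k=1..m2. x (?P i l) * M2 l k * y (?Q j k))
     = bilin n2 m2 (\<lambda>l. \<Sum>i=1..n1. x (pairing n2 i l)) M2 (\<lambda>k. \<Sum>j=1..m1. y (pairing m2 j k))"
  proof -
    have "(\<Sum>i=1..n1. \<Sum>l=1..n2. \<Sum>j=1..m1. \<Sum>k=1..m2. x (?P i l) * M2 l k * y (?Q j k))
       = (\<Sum>l=1..n2. \<Sum>i=1..n1. \<Sum>k=1..m2. \<Sum>j=1..m1. x (?P i l) * M2 l k * y (?Q j k))"
      by (subst sum.swap, rule sum.cong[OF refl], rule sum.cong[OF refl], rule sum.swap)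
    also have "\<dots> = (\<Sum>l=1..n2. \<Sum>k=1..m2. \<Sum>i=1..n1. \<Sum>j=1..m1. x (?P i l) * M2 l k * y (?Q j k))"
      by (rule sum.cong[OF refl], rule sum.swap)
    also have "\<dots> = (\<Sum>l=1..n2. \<Sum>k=1..m2. \<Sum>j=1..m1. \<Sum>i=1..n1. x (?P i l) * M2 l k * y (?Q j k))"
      by (rule sum.cong[OF refl], rule sum.cong[OF refl], rule sum.swap)
    finally show ?thesis
      unfolding bilin_def sum_distrib_left sum_distrib_right by simp
  qed
  finally show ?thesis .
qed


lemma pair_range: "i \<in> {1..n1} \<Longrightarrow> l \<in> {1..n2} \<Longrightarrow> pairing n2 i l \<in> {1..n1*n2}"
proof -
  assume a: "i \<in> {1..n1}" "l \<in> {1..n2}"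
  have "(i-1)*n2 + l \<le> (i-1)*n2 + n2" using a by simp
  also have "\<dots> = i*n2" using a by (cases i) auto
  also have "\<dots> \<le> n1*n2" using a by simp
  finally show ?thesis using a by (simp add: pairing_def)
qed

lemma pair_div_mod:
  assumes "i \<ge> 1" "l \<in> {1..n2}"
  shows "(pairing n2 i l - 1) div n2 + 1 = i" "(pairing n2 i l - 1) mod n2 + 1 = l"
proof -
  obtain i' l' where il: "i = Suc i'" "l = Suc l'" using assms by (cases i; cases l) auto
  have "l' < n2" using assms il by auto
  then show "(pairing n2 i l - 1) div n2 + 1 = i" "(pairing n2 i l - 1) mod n2 + 1 = l"
    unfolding il pairing_def by auto
qed

lemma bilin_cong:
  "(\<forall>i\<in>{1..n}. x i = x' i) \<Longrightarrow> (\<forall>j\<in>{1..m}. y j = y' j) \<Longrightarrow> bilin n m x M y = bilin n m x' M y'"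
  unfolding bilin_def by (intro sum.cong refl) auto

lemma marg:
  assumes "x \<in> mixed_strats (n1*n2)"
  shows "(\<lambda>i. \<Sum>l=1..n2. x (pairing n2 i l)) \<in> mixed_strats n1"
    "(\<lambda>l. \<Sum>i=1..n1. x (pairing n2 i l)) \<in> mixed_strats n2"
proof -
  have nn: "\<And>i l. i \<in> {1..n1} \<Longrightarrow> l \<in> {1..n2} \<Longrightarrow> x (pairing n2 i l) \<ge> 0"
    using assms pair_range unfolding mixed_strats_def by blast
  have s: "(\<Sum>i=1..n1. \<Sum>l=1..n2. x (pairing n2 i l)) = 1"
    using assms sum_pair[of x n1 n2] unfolding mixed_strats_def by simp
  show "(\<lambda>i. \<Sum>l=1..n2. x (pairing n2 i l)) \<in> mixed_strats n1"
    unfolding mixed_strats_def using s nn by (auto intro: sum_nonneg)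
  show "(\<lambda>l. \<Sum>i=1..n1. x (pairing n2 i l)) \<in> mixed_strats n2"
  proof -
    have "(\<Sum>l=1..n2. \<Sum>i=1..n1. x (pairing n2 i l)) = (\<Sum>i=1..n1. \<Sum>l=1..n2. x (pairing n2 i l))"
      by (rule sum.swap)
    then show ?thesis unfolding mixed_strats_def using s nn by (auto intro: sum_nonneg)
  qed
qed

lemma prod_strat:
  assumes u: "u \<in> mixed_strats n1" and v: "v \<in> mixed_strats n2"
  defines "w \<equiv> \<lambda>p. u ((p-1) div n2 + 1) * v ((p-1) mod n2 + 1)"
  shows "w \<in> mixed_strats (n1*n2)"
    "\<forall>i\<in>{1..n1}. (\<Sum>l=1..n2. w (pairing n2 i l)) = u i"
    "\<forall>l\<in>{1..n2}. (\<Sum>i=1..n1. w (pairing n2 i l)) = v l"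
proof -
  have wp: "w (pairing n2 i l) = u i * v l" if "i \<in> {1..n1}" "l \<in> {1..n2}" for i l
    using pair_div_mod[of i l n2] that unfolding w_def by simp
  have su: "(\<Sum>i=1..n1. u i) = 1" and sv: "(\<Sum>l=1..n2. v l) = 1"
    using u v unfolding mixed_strats_def by auto
  show "\<forall>i\<in>{1..n1}. (\<Sum>l=1..n2. w (pairing n2 i l)) = u i"
    using wp sv by (simp add: sum_distrib_left[symmetric])
  show "\<forall>l\<in>{1..n2}. (\<Sum>i=1..n1. w (pairing n2 i l)) = v l"
    using wp su by (simp add: sum_distrib_right[symmetric])
  have nn: "w p \<ge> 0" if "p \<in> {1..n1*n2}" for p
  proof -
    have n2: "n2 > 0" using that by (cases n2) auto
    have "(p-1) div n2 < n1" using that n2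
      by (intro less_mult_imp_div_less) auto
    hence "(p-1) div n2 + 1 \<in> {1..n1}" by auto
    moreover have "(p-1) mod n2 + 1 \<in> {1..n2}" using n2
      by (simp add: Suc_leI)
    ultimately show ?thesis unfolding w_def using u v unfolding mixed_strats_def by auto
  qed
  have "(\<Sum>p=1..n1*n2. w p) = (\<Sum>i=1..n1. \<Sum>l=1..n2. u i * v l)"
    unfolding sum_pair by (intro sum.cong refl) (simp add: wp)
  also have "\<dots> = 1" using su sv by (simp add: sum_distrib_left[symmetric] sum_distrib_right[symmetric])
  finally show "w \<in> mixed_strats (n1*n2)" unfolding mixed_strats_def using nn by auto
qed


theorem theorem3:
  fixes n1 m1 n2 m2 :: nat
    and A1 B1 A2 B2 A B :: "nat \<Rightarrow> nat \<Rightarrow> real"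
    and x y :: "nat \<Rightarrow> real"
  assumes "is_product_game n1 m1 n2 m2 A1 B1 A2 B2 A B"
    and "nash_eq (n1 * n2) (m1 * m2) A B x y"
  shows "nash_eq n1 m1 A1 B1
           (\<lambda>i. \<Sum>l=1..n2. x (pairing n2 i l))
           (\<lambda>j. \<Sum>l=1..m2. y (pairing m2 j l))"
proof -
  define X1 where "X1 = (\<lambda>i. \<Sum>l=1..n2. x (pairing n2 i l))"
  define X2 where "X2 = (\<lambda>l. \<Sum>i=1..n1. x (pairing n2 i l))"
  define Y1 where "Y1 = (\<lambda>j. \<Sum>k=1..m2. y (pairing m2 j k))"
  define Y2 where "Y2 = (\<lambda>k. \<Sum>j=1..m1. y (pairing m2 j k))"
  have HA: "\<forall>i1\<in>{1..n1}. \<forall>i2\<in>{1..n2}. \<forall>j1\<in>{1..m1}. \<forall>j2\<in>{1..m2}.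
        A (pairing n2 i1 i2) (pairing m2 j1 j2) = A1 i1 j1 + A2 i2 j2"
   and HB: "\<forall>i1\<in>{1..n1}. \<forall>i2\<in>{1..n2}. \<forall>j1\<in>{1..m1}. \<forall>j2\<in>{1..m2}.
        B (pairing n2 i1 i2) (pairing m2 j1 j2) = B1 i1 j1 + B2 i2 j2"
    using assms(1) unfolding is_product_game_def by auto
  have xm: "x \<in> mixed_strats (n1*n2)" and ym: "y \<in> mixed_strats (m1*m2)"
   and xbest: "\<forall>x'\<in>mixed_strats (n1*n2). bilin (n1*n2) (m1*m2) x A y \<ge> bilin (n1*n2) (m1*m2) x' A y"
   and ybest: "\<forall>y'\<in>mixed_strats (m1*m2). bilin (n1*n2) (m1*m2) x B y \<ge> bilin (n1*n2) (m1*m2) x B y'"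
    using assms(2) unfolding nash_eq_def by auto
  have X1m: "X1 \<in> mixed_strats n1" and X2m: "X2 \<in> mixed_strats n2"
    using marg[OF xm] unfolding X1_def X2_def by auto
  have Y1m: "Y1 \<in> mixed_strats m1" and Y2m: "Y2 \<in> mixed_strats m2"
    using marg[OF ym] unfolding Y1_def Y2_def by auto
  have gA: "bilin (n1*n2) (m1*m2) x A y = bilin n1 m1 X1 A1 Y1 + bilin n2 m2 X2 A2 Y2"
    unfolding X1_def X2_def Y1_def Y2_def by (rule bilin_gen[OF HA])
  have gB: "bilin (n1*n2) (m1*m2) x B y = bilin n1 m1 X1 B1 Y1 + bilin n2 m2 X2 B2 Y2"
    unfolding X1_def X2_def Y1_def Y2_def by (rule bilin_gen[OF HB])
  have rowbest: "bilin n1 m1 X1 A1 Y1 \<ge> bilin n1 m1 u A1 Y1" if u: "u \<in> mixed_strats n1" for u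
  proof -
    define w where "w = (\<lambda>p. u ((p-1) div n2 + 1) * X2 ((p-1) mod n2 + 1))"
    note ps = prod_strat[OF u X2m, folded w_def]
    have "bilin (n1*n2) (m1*m2) w A y = bilin n1 m1 (\<lambda>i. \<Sum>l=1..n2. w (pairing n2 i l)) A1 Y1
        + bilin n2 m2 (\<lambda>l. \<Sum>i=1..n1. w (pairing n2 i l)) A2 Y2"
      unfolding Y1_def Y2_def by (rule bilin_gen[OF HA])
    also have "\<dots> = bilin n1 m1 u A1 Y1 + bilin n2 m2 X2 A2 Y2"
      using ps unfolding w_def by (intro arg_cong2[where f="(+)"] bilin_cong) auto
    moreover have "bilin (n1*n2) (m1*m2) x A y \<ge> bilin (n1*n2) (m1*m2) w A y" using xbest ps(1) unfolding w_def by blast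
    ultimately show ?thesis using gA by linarith
  qed
  have colbest: "bilin n1 m1 X1 B1 Y1 \<ge> bilin n1 m1 X1 B1 v" if v: "v \<in> mixed_strats m1" for v
  proof -
    define w where "w = (\<lambda>p. v ((p-1) div m2 + 1) * Y2 ((p-1) mod m2 + 1))"
    note ps = prod_strat[OF v Y2m, folded w_def]
    have "bilin (n1*n2) (m1*m2) x B w = bilin n1 m1 X1 B1 (\<lambda>j. \<Sum>k=1..m2. w (pairing m2 j k))
        + bilin n2 m2 X2 B2 (\<lambda>k. \<Sum>j=1..m1. w (pairing m2 j k))"
      unfolding X1_def X2_def by (rule bilin_gen[OF HB])
    also have "\<dots> = bilin n1 m1 X1 B1 v + bilin n2 m2 X2 B2 Y2"
      using ps unfolding w_def by (intro arg_cong2[where f="(+)"] bilin_cong) auto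
    moreover have "bilin (n1*n2) (m1*m2) x B y \<ge> bilin (n1*n2) (m1*m2) x B w" using ybest ps(1) unfolding w_def by blast
    ultimately show ?thesis using gB by linarith
  qed
  show ?thesis
    unfolding nash_eq_def X1_def[symmetric]
    using X1m Y1m rowbest colbest unfolding Y1_def by auto
qed

end
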